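(* Let $p>2$ be a prime and $d\geq 2$ an integer with $p-1=df$. Let $\omega$ be a fixed generator of $\mathbb{F}_p^*$, and for $i,j\in\mathbb{Z}/d\mathbb{Z}$ let $(i,j)=\#\{(u,v):0\leq u,v\leq f-1,\ 1+\omega^{du+i}\equiv\omega^{dv+j}\pmod p\}$. Let $\theta=0$ if $f$ is even and $\theta=d/2$ if $f$ is odd. Define the $d\times d$ matrix $M=(m_{ij})_{0\leq i,j\leq d-1}$ by $m_{ij}=0$ if $(i,j)=0$ and $m_{ij}=1$ otherwise, and write $M^n=(m^{(n)}_{ij})$. Then \[ g_d(p)=\max_{0\leq\alpha\leq d-1}\min\{s\mid m^{(s-1)}_{(\alpha+\theta)\,\theta}\neq0\}. \]
   Context: For $a\in\mathbb{F}_p^*$, $s_d(p,a)=\min\{k\mid a=\sum_{i=1}^k a_i^d,\ a_i\in\mathbb{F}_p^*\}$, and $g_d(p)=\max_{a\in\mathbb{F}_p^*}s_d(p,a)$. The index $\alpha+\theta$ is taken modulo $d$, and $M^0$ is the identity matrix. *)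

theory Defs
  imports "HOL-Number_Theory.Number_Theory"
begin

definition s_d :: "nat \<Rightarrow> nat \<Rightarrow> int \<Rightarrow> nat" where
  "s_d d p a = (LEAST k. \<exists>x :: nat \<Rightarrow> int.
       (\<forall>i<k. \<not> int p dvd x i) \<and> [a = (\<Sum>i<k. x i ^ d)] (mod int p))"

definition g_d :: "nat \<Rightarrow> nat \<Rightarrow> nat" where
  "g_d d p = Max (s_d d p ` {1..int p - 1})"

(* cyclotomic number (i,j) of order d w.r.t. generator w, with p - 1 = d f;
   i, j in {0..d-1} represent Z/dZ *)
definition cyc :: "nat \<Rightarrow> nat \<Rightarrow> nat \<Rightarrow> nat \<Rightarrow> nat \<Rightarrow> nat \<Rightarrow> nat" where
  "cyc p d f w i j = card {(u, v). u < f \<and> v < f \<and>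
       [1 + w ^ (d * u + i) = w ^ (d * v + j)] (mod p)}"

fun mpow :: "nat \<Rightarrow> (nat \<Rightarrow> nat \<Rightarrow> nat) \<Rightarrow> nat \<Rightarrow> nat \<Rightarrow> nat \<Rightarrow> nat" where
  "mpow d M 0 = (\<lambda>i j. if i = j then 1 else 0)"
| "mpow d M (Suc n) = (\<lambda>i j. \<Sum>k<d. mpow d M n i k * M k j)"

end

theory Submission
  imports Defs
begin

fun reach :: "nat \<Rightarrow> (nat \<Rightarrow> nat \<Rightarrow> nat) \<Rightarrow> nat \<Rightarrow> nat \<Rightarrow> nat \<Rightarrow> bool" where
  "reach d M 0 i j = (i = j)"
| "reach d M (Suc n) i j = (\<exists>k<d. reach d M n i k \<and> M k j \<noteq> 0)"

lemma mpow_reach: "mpow d M n i j \<noteq> 0 \<longleftrightarrow> reach d M n i j"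
proof (induction n arbitrary: j)
  case 0
  then show ?case by simp
next
  case (Suc n)
  have "mpow d M (Suc n) i j \<noteq> 0 \<longleftrightarrow> (\<exists>k<d. mpow d M n i k * M k j \<noteq> 0)"
    by auto
  also have "\<dots> \<longleftrightarrow> (\<exists>k<d. reach d M n i k \<and> M k j \<noteq> 0)"
    using Suc by simp
  finally show ?case by simp
qed

lemma reach_path:
  assumes "i < d" "j < d"
  shows "reach d M n i j \<longleftrightarrow> (\<exists>ks. ks 0 = i \<and> ks n = j \<and> (\<forall>t\<le>n. ks t < d) \<and>
            (\<forall>t<n. M (ks t) (ks (Suc t)) \<noteq> 0))"
  using assms(2)
proof (induction n arbitrary: j)
  case 0
  show ?case
  proof
    assume "reach d M 0 i j"
    then show "\<exists>ks. ks 0 = i \<and> ks 0 = j \<and> (\<forall>t\<le>0. ks t < d) \<and> (\<forall>t<0. M (ks t) (ks (Suc t)) \<noteq> 0)"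
      using assms by (intro exI[of _ "\<lambda>_. i"]) auto
  qed auto
next
  case (Suc n)
  show ?case
  proof
    assume "reach d M (Suc n) i j"
    then obtain k where k: "k < d" "reach d M n i k" "M k j \<noteq> 0" by auto
    then obtain ks where ks: "ks 0 = i" "ks n = k" "\<forall>t\<le>n. ks t < d" "\<forall>t<n. M (ks t) (ks (Suc t)) \<noteq> 0"
      using Suc.IH by blast
    define ks' where "ks' = ks(Suc n := j)"
    have "ks' 0 = i" "ks' (Suc n) = j" using ks ks'_def by auto
    moreover have "\<forall>t\<le>Suc n. ks' t < d"
      using ks Suc.prems unfolding ks'_def by (auto simp: le_Suc_eq)
    moreover have "\<forall>t<Suc n. M (ks' t) (ks' (Suc t)) \<noteq> 0"
      using ks k unfolding ks'_def by (auto simp: less_Suc_eq)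
    ultimately show "\<exists>ks. ks 0 = i \<and> ks (Suc n) = j \<and> (\<forall>t\<le>Suc n. ks t < d) \<and> (\<forall>t<Suc n. M (ks t) (ks (Suc t)) \<noteq> 0)"
      by blast
  next
    assume "\<exists>ks. ks 0 = i \<and> ks (Suc n) = j \<and> (\<forall>t\<le>Suc n. ks t < d) \<and> (\<forall>t<Suc n. M (ks t) (ks (Suc t)) \<noteq> 0)"
    then obtain ks where ks: "ks 0 = i" "ks (Suc n) = j" "\<forall>t\<le>Suc n. ks t < d" "\<forall>t<Suc n. M (ks t) (ks (Suc t)) \<noteq> 0"
      by blast
    have "reach d M n i (ks n)"
      using Suc.IH[of "ks n"] ks by auto
    moreover have "ks n < d" "M (ks n) j \<noteq> 0" using ks by auto
    ultimately show "reach d M (Suc n) i j" by auto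
  qed
qed

lemma reach_rev:
  assumes "i < d" "j < d" "0 < d"
    and sym: "\<And>a b. a < d \<Longrightarrow> b < d \<Longrightarrow> M a b \<noteq> 0 \<Longrightarrow> M ((b + th) mod d) ((a + th) mod d) \<noteq> 0"
    and "reach d M n i j"
  shows "reach d M n ((j + th) mod d) ((i + th) mod d)"
proof -
  obtain ks where ks: "ks 0 = i" "ks n = j" "\<forall>t\<le>n. ks t < d" "\<forall>t<n. M (ks t) (ks (Suc t)) \<noteq> 0"
    using reach_path[OF assms(1,2)] assms(5) by blast
  define ks' where "ks' t = (ks (n - t) + th) mod d" for t
  have "\<forall>t<n. M (ks' t) (ks' (Suc t)) \<noteq> 0"
  proof (intro allI impI)
    fix t assume t: "t < n"
    have e: "n - t = Suc (n - Suc t)" using t by simp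
    have "M (ks (n - Suc t)) (ks (Suc (n - Suc t))) \<noteq> 0" using ks t by auto
    from sym[OF _ _ this] ks t show "M (ks' t) (ks' (Suc t)) \<noteq> 0"
      unfolding ks'_def e by auto
  qed
  moreover have "\<forall>t\<le>n. ks' t < d" using assms(3) unfolding ks'_def by auto
  moreover have "ks' 0 = (j + th) mod d" "ks' n = (i + th) mod d" using ks unfolding ks'_def by auto
  ultimately show ?thesis
    using reach_path[of "(j + th) mod d" d "(i + th) mod d" M n] assms(3) by auto
qed

locale cycset =
  fixes p d f w :: nat
  assumes pr: "prime p" and p2: "p > 2" and d2: "d \<ge> 2" and pdf: "p - 1 = d * f"
    and prim: "residue_primroot p w"
begin

abbreviation P :: int where "P \<equiv> int p"

definition ind :: "int \<Rightarrow> nat" where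
  "ind x = (SOME e. e < p - 1 \<and> [int w ^ e = x] (mod P))"

definition cls :: "int \<Rightarrow> nat" where
  "cls x = ind x mod d"

lemma primeP: "prime P" using pr by simp

lemma dpos: "d > 0" using d2 by simp

lemma dvd_d: "d dvd p - 1" using pdf by simp

lemma cop: "coprime p w" using prim by (simp add: residue_primroot_def)

lemma ordw: "ord p w = p - 1"
  using prim pr by (simp add: residue_primroot_def totient_prime)

lemma unit_w: "\<not> P dvd int w ^ e"
proof
  assume "P dvd int w ^ e"
  then have "P dvd int w" using primeP prime_dvd_power by blast
  then have "p dvd w" by simp
  then show False using cop pr
    by (metis not_prime_unit coprime_absorb_left)
qed

lemma pow_cong: "[int w ^ a = int w ^ b] (mod P) \<longleftrightarrow> [a = b] (mod (p - 1))"
proof -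
  have "[int w ^ a = int w ^ b] (mod P) \<longleftrightarrow> [w ^ a = w ^ b] (mod p)"
    using cong_int_iff by force
  also have "\<dots> \<longleftrightarrow> [a = b] (mod (ord p w))"
    using cop by (intro order_divides_expdiff) (simp add: coprime_commute)
  finally show ?thesis by (simp add: ordw)
qed

lemma dlog_ex:
  assumes "\<not> P dvd x"
  shows "\<exists>e. e < p - 1 \<and> [int w ^ e = x] (mod P)"
proof -
  define n where "n = nat (x mod P)"
  have pos: "x mod P > 0"
  proof -
    have "x mod P \<noteq> 0" using assms by (simp add: dvd_eq_mod_eq_0)
    moreover have "x mod P \<ge> 0" using pr prime_gt_0_nat by simp
    ultimately show ?thesis by linarith
  qed
  have lt: "x mod P < P" using pr by (simp add: prime_gt_0_nat)
  have "coprime n p"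
  proof -
    have "\<not> p dvd n"
    proof
      assume "p dvd n"
      then have "P dvd int n" by simp
      then have "P dvd x mod P" using pos n_def by simp
      then show False using assms by (simp add: dvd_mod_iff)
    qed
    then show ?thesis using pr by (metis prime_imp_coprime_nat coprime_commute)
  qed
  then have "n \<in> totatives p" using pos lt n_def by (auto simp: totatives_def)
  moreover have "(\<lambda>i. w ^ i mod p) ` {..<totient p} = totatives p"
    using residue_primroot_is_generator[OF _ prim] pr prime_gt_1_nat
    unfolding bij_betw_def by blast
  ultimately have "n \<in> (\<lambda>i. w ^ i mod p) ` {..<totient p}" by simp
  then obtain i where i: "i < totient p" "w ^ i mod p = n"
    by auto
  have "int (w ^ i mod p) = x mod P" using i pos n_def by simp
  then have "[int w ^ i = x] (mod P)"
    by (simp add: cong_def zmod_int of_nat_power)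
  then show ?thesis using i pr by (auto simp: totient_prime)
qed

lemma ind_spec:
  assumes "\<not> P dvd x"
  shows "ind x < p - 1" "[int w ^ ind x = x] (mod P)"
  using someI_ex[OF dlog_ex[OF assms]] unfolding ind_def by auto

lemma cls_lt: "cls x < d" using dpos by (simp add: cls_def)

lemma cls_eq:
  assumes "\<not> P dvd x" "[int w ^ e = x] (mod P)"
  shows "cls x = e mod d"
proof -
  have "[int w ^ ind x = int w ^ e] (mod P)"
    using ind_spec(2)[OF assms(1)] assms(2) by (meson cong_sym cong_trans)
  then have "[ind x = e] (mod (p - 1))" by (simp add: pow_cong)
  then have "[ind x = e] (mod d)" using dvd_d cong_dvd_modulus_nat by blast
  then show ?thesis by (simp add: cls_def cong_def)
qed


lemma unit_m1: "\<not> P dvd (-1)"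
  using pr not_prime_1 by auto

lemma unit_1: "\<not> P dvd 1"
  using pr not_prime_1 by auto

lemma unit_mult: "\<not> P dvd x \<Longrightarrow> \<not> P dvd y \<Longrightarrow> \<not> P dvd (x * y)"
  using primeP prime_dvd_mult_iff by blast

lemma unit_pow: "\<not> P dvd x \<Longrightarrow> \<not> P dvd (x ^ n)"
  using primeP prime_dvd_power by blast

lemma unit_cong: "[x = y] (mod P) \<Longrightarrow> \<not> P dvd y \<Longrightarrow> \<not> P dvd x"
  using cong_dvd_iff by blast

lemma cls_cong:
  assumes "\<not> P dvd y" "[x = y] (mod P)"
  shows "cls x = cls y"
proof -
  have ux: "\<not> P dvd x" using unit_cong assms by blast
  have "[int w ^ ind y = x] (mod P)"
    using ind_spec(2)[OF assms(1)] assms(2) by (meson cong_sym cong_trans)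
  then have "cls x = ind y mod d" using cls_eq ux by blast
  then show ?thesis by (simp add: cls_def)
qed

lemma cls_mul:
  assumes "\<not> P dvd x" "\<not> P dvd y"
  shows "cls (x * y) = (cls x + cls y) mod d"
proof -
  have "[int w ^ ind x * int w ^ ind y = x * y] (mod P)"
    using ind_spec(2)[OF assms(1)] ind_spec(2)[OF assms(2)] by (rule cong_mult)
  then have "[int w ^ (ind x + ind y) = x * y] (mod P)" by (simp add: power_add)
  then have "cls (x * y) = (ind x + ind y) mod d"
    using cls_eq unit_mult assms by blast
  then show ?thesis by (simp add: cls_def mod_add_eq)
qed

lemma cls_powd:
  assumes "\<not> P dvd z"
  shows "cls (z ^ d) = 0"
proof -
  have "[(int w ^ ind z) ^ d = z ^ d] (mod P)"
    using ind_spec(2)[OF assms] by (rule cong_pow)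
  then have "[int w ^ (ind z * d) = z ^ d] (mod P)" by (simp add: power_mult)
  then have "cls (z ^ d) = (ind z * d) mod d"
    using cls_eq unit_pow assms by blast
  then show ?thesis by simp
qed

lemma cls_same:
  assumes "\<not> P dvd y" "\<not> P dvd z" "[x = y * z ^ d] (mod P)"
  shows "cls x = cls y"
proof -
  have "cls x = cls (y * z ^ d)"
    using cls_cong assms unit_mult unit_pow by blast
  also have "\<dots> = cls y"
    using cls_mul[OF assms(1) unit_pow[OF assms(2)]] cls_powd[OF assms(2)]
    by (simp add: cls_def)
  finally show ?thesis .
qed

lemma cls_same_ex:
  assumes "\<not> P dvd x" "\<not> P dvd y" "cls x = cls y"
  shows "\<exists>z. \<not> P dvd z \<and> [x = y * z ^ d] (mod P)"
proof -
  define a where "a = ind x"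
  define b where "b = ind y"
  have a: "a < p - 1" "[int w ^ a = x] (mod P)" using ind_spec[OF assms(1)] a_def by auto
  have b: "b < p - 1" "[int w ^ b = y] (mod P)" using ind_spec[OF assms(2)] b_def by auto
  have "a mod d = b mod d" using assms(3) a_def b_def by (simp add: cls_def)
  moreover have "(a + (p - 1)) mod d = a mod d" using pdf by simp
  ultimately have "(a + (p - 1)) mod d = b mod d" by simp
  then have "d dvd a + (p - 1) - b" using b(1) by (subst mod_eq_dvd_iff_nat[symmetric]) auto
  then obtain c where c: "a + (p - 1) - b = d * c" by blast
  define z where "z = int w ^ c"
  have "[y * z ^ d = int w ^ b * int w ^ (c * d)] (mod P)"
    unfolding z_def by (simp add: power_mult cong_mult[OF cong_sym[OF b(2)]])
  also have "int w ^ b * int w ^ (c * d) = int w ^ (a + (p - 1))"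
  proof -
    have "b + c * d = a + (p - 1)" using c b(1) by (simp add: mult.commute)
    then show ?thesis by (simp add: power_add[symmetric])
  qed
  also have "[int w ^ (a + (p - 1)) = int w ^ a] (mod P)"
    unfolding pow_cong by (simp add: cong_def)
  also have "[int w ^ a = x] (mod P)" by (rule a(2))
  finally show ?thesis using unit_w z_def by (meson cong_sym)
qed

lemma ev_p1: "even (p - 1)"
proof -
  obtain k where "p = 2 * k + 1" using prime_odd_nat[OF pr p2] by (blast elim: oddE)
  then show ?thesis by simp
qed

definition th :: nat where "th = (if even f then 0 else d div 2)"

lemma th_lt: "th < d" using dpos by (simp add: th_def)

lemma th2: "(th + th) mod d = 0"
proof (cases "even f")
  case False
  have "even (d * f)" using ev_p1 unfolding pdf .
  then have "even d" using False by simp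
  then obtain e where "d = 2 * e" by blast
  then show ?thesis using False unfolding th_def by (simp flip: mult_2)
qed (simp add: th_def)

lemma cls_m1: "cls (-1) = th"
proof -
  define h where "h = int w ^ ((p - 1) div 2)"
  have ev: "even (p - 1)" by (rule ev_p1)
  have "h ^ 2 = int w ^ (p - 1)" unfolding h_def using ev
    by (simp add: power_mult[symmetric])
  also have "[int w ^ (p - 1) = int w ^ 0] (mod P)" unfolding pow_cong by (simp add: cong_def)
  finally have "[h ^ 2 = 1] (mod P)" by simp
  then have "P dvd (h - 1) * (h + 1)"
    by (simp add: cong_iff_dvd_diff power2_eq_square algebra_simps)
  then have "P dvd h - 1 \<or> P dvd h + 1" using primeP prime_dvd_mult_iff by blast
  moreover have "\<not> P dvd h - 1"
  proof
    assume "P dvd h - 1"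
    then have "[int w ^ ((p - 1) div 2) = int w ^ 0] (mod P)"
      unfolding h_def by (simp add: cong_iff_dvd_diff)
    then have "[(p - 1) div 2 = 0] (mod (p - 1))" using pow_cong[of "(p - 1) div 2" 0] by simp
    moreover have "0 < (p - 1) div 2" "(p - 1) div 2 < p - 1" using p2 by auto
    ultimately show False by (simp add: cong_def)
  qed
  ultimately have "P dvd h + 1" by blast
  then have "[h = -1] (mod P)" by (simp add: cong_iff_dvd_diff)
  then have "cls (-1) = ((p - 1) div 2) mod d"
    using cls_eq[of "-1"] h_def unit_m1 by simp
  also have "\<dots> = th"
    unfolding th_def
  proof (cases "even f")
    case True
    then obtain g where "f = 2 * g" by blast
    then show "(p - 1) div 2 mod d = (if even f then 0 else d div 2)" using True pdf by simp
  next
    case False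
    then obtain g where g: "f = 2 * g + 1" using oddE by blast
    have "even (d * f)" using ev_p1 unfolding pdf .
    then have "even d" using False by simp
    then obtain e where e: "d = 2 * e" by blast
    have "(p - 1) div 2 = d * g + e" using pdf g e by (simp add: algebra_simps)
    then show "(p - 1) div 2 mod d = (if even f then 0 else d div 2)" using False e dpos by simp
  qed
  finally show ?thesis .
qed

lemma cls_neg:
  assumes "\<not> P dvd x"
  shows "cls (- x) = (cls x + th) mod d"
proof -
  have "\<not> P dvd (-1)" by (rule unit_m1)
  then have "cls ((-1) * x) = (cls (-1) + cls x) mod d" using cls_mul assms by blast
  then show ?thesis using cls_m1 by (simp add: add.commute)
qed


lemma cyc_iff:
  assumes "i < d" "j < d"
  shows "cyc p d f w i j \<noteq> 0 \<longleftrightarrow>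
    (\<exists>x. \<not> P dvd x \<and> \<not> P dvd (1 + x) \<and> cls x = i \<and> cls (1 + x) = j)"
proof -
  define S where "S = {(u, v). u < f \<and> v < f \<and> [1 + w ^ (d * u + i) = w ^ (d * v + j)] (mod p)}"
  have fin: "finite S" by (rule finite_subset[of _ "{..<f} \<times> {..<f}"]) (auto simp: S_def)
  have "cyc p d f w i j = card S" by (simp add: cyc_def S_def)
  then have "cyc p d f w i j \<noteq> 0 \<longleftrightarrow> S \<noteq> {}" using fin by simp
  also have "\<dots> \<longleftrightarrow> (\<exists>x. \<not> P dvd x \<and> \<not> P dvd (1 + x) \<and> cls x = i \<and> cls (1 + x) = j)"
  proof
    assume "S \<noteq> {}"
    then obtain u v where uv: "u < f" "v < f" "[1 + w ^ (d * u + i) = w ^ (d * v + j)] (mod p)"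
      unfolding S_def by auto
    define x where "x = int w ^ (d * u + i)"
    have "[int (1 + w ^ (d * u + i)) = int (w ^ (d * v + j))] (mod P)"
      using uv(3) cong_int_iff by blast
    then have c: "[1 + x = int w ^ (d * v + j)] (mod P)"
      unfolding x_def by simp
    have "\<not> P dvd x" unfolding x_def by (rule unit_w)
    moreover have "\<not> P dvd (1 + x)" using unit_cong[OF c unit_w] .
    moreover have "cls x = i" using cls_eq[OF unit_w, of "d * u + i" "d * u + i"] assms x_def by simp
    moreover have "cls (1 + x) = j"
      using cls_eq[OF \<open>\<not> P dvd (1 + x)\<close> cong_sym[OF c]] assms by simp
    ultimately show "\<exists>x. \<not> P dvd x \<and> \<not> P dvd (1 + x) \<and> cls x = i \<and> cls (1 + x) = j" by blast
  next
    assume "\<exists>x. \<not> P dvd x \<and> \<not> P dvd (1 + x) \<and> cls x = i \<and> cls (1 + x) = j"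
    then obtain x where x: "\<not> P dvd x" "\<not> P dvd (1 + x)" "cls x = i" "cls (1 + x) = j" by blast
    define a where "a = ind x"
    define b where "b = ind (1 + x)"
    have a: "a < p - 1" "[int w ^ a = x] (mod P)" using ind_spec[OF x(1)] a_def by auto
    have b: "b < p - 1" "[int w ^ b = 1 + x] (mod P)" using ind_spec[OF x(2)] b_def by auto
    have ai: "a = d * (a div d) + i" using x(3) a_def mult_div_mod_eq[of d a] unfolding cls_def by simp
    have bj: "b = d * (b div d) + j" using x(4) b_def mult_div_mod_eq[of d b] unfolding cls_def by simp
    have au: "a div d < f" using a(1) pdf dpos by (simp add: div_less_iff_less_mult mult.commute)
    have bv: "b div d < f" using b(1) pdf dpos by (simp add: div_less_iff_less_mult mult.commute)
    have "[1 + int w ^ a = int w ^ b] (mod P)"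
      using cong_trans[OF cong_add[OF cong_refl[of 1] a(2)] cong_sym[OF b(2)]] .
    then have "[int (1 + w ^ a) = int (w ^ b)] (mod P)" by simp
    then have "[1 + w ^ a = w ^ b] (mod p)" using cong_int_iff by blast
    then have "(a div d, b div d) \<in> S" using au bv ai bj unfolding S_def by simp
    then show "S \<noteq> {}" by blast
  qed
  finally show ?thesis .
qed

definition Mm :: "nat \<Rightarrow> nat \<Rightarrow> nat" where
  "Mm = (\<lambda>i j. if cyc p d f w i j = 0 then 0 else 1)"

lemma Mm_iff: "i < d \<Longrightarrow> j < d \<Longrightarrow> Mm i j \<noteq> 0 \<longleftrightarrow>
    (\<exists>x. \<not> P dvd x \<and> \<not> P dvd (1 + x) \<and> cls x = i \<and> cls (1 + x) = j)"
proof -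
  assume "i < d" "j < d"
  have e: "Mm i j \<noteq> 0 \<longleftrightarrow> cyc p d f w i j \<noteq> 0" by (simp add: Mm_def)
  show ?thesis unfolding e using cyc_iff[OF \<open>i < d\<close> \<open>j < d\<close>] .
qed

lemma Mm_sym:
  assumes "i < d" "j < d" "Mm i j \<noteq> 0"
  shows "Mm ((j + th) mod d) ((i + th) mod d) \<noteq> 0"
proof -
  obtain x where x: "\<not> P dvd x" "\<not> P dvd (1 + x)" "cls x = i" "cls (1 + x) = j"
    using Mm_iff assms by blast
  define y where "y = - (1 + x)"
  have uy: "\<not> P dvd y" unfolding y_def using x(2) by (metis dvd_minus_iff)
  have "1 + y = - x" using y_def by simp
  then have u1y: "\<not> P dvd (1 + y)" using x(1) by simp
  have "cls y = (j + th) mod d" using cls_neg[OF x(2)] x(4) y_def by simp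
  moreover have "cls (1 + y) = (i + th) mod d" using cls_neg[OF x(1)] x(3) \<open>1 + y = - x\<close> by simp
  ultimately show ?thesis using Mm_iff[of "(j + th) mod d" "(i + th) mod d"] dpos uy u1y by auto
qed

definition rep :: "nat \<Rightarrow> int \<Rightarrow> bool" where
  "rep k a = (\<exists>x :: nat \<Rightarrow> int. (\<forall>i<k. \<not> P dvd x i) \<and> [a = (\<Sum>i<k. x i ^ d)] (mod P))"

lemma s_d_rep: "s_d d p a = (LEAST k. rep k a)"
  by (simp add: s_d_def rep_def)

lemma cls_one: "cls 1 = 0"
  using cls_eq[of 1 0] unit_m1 by simp

lemma repA:
  assumes "rep k a" "\<not> P dvd a"
  shows "\<exists>s. 1 \<le> s \<and> s \<le> k \<and> reach d Mm (s - 1) 0 (cls a)"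
  using assms
proof (induction k arbitrary: a)
  case 0
  then show ?case by (simp add: rep_def cong_dvd_iff)
next
  case (Suc m)
  obtain x where x: "\<forall>i<Suc m. \<not> P dvd x i" "[a = (\<Sum>i<Suc m. x i ^ d)] (mod P)"
    using Suc.prems(1) unfolding rep_def by blast
  define b where "b = (\<Sum>i<m. x i ^ d)"
  have ab: "[a = b + x m ^ d] (mod P)" using x(2) b_def by simp
  have um: "\<not> P dvd x m" using x(1) by simp
  show ?case
  proof (cases "P dvd b")
    case True
    then have "[b = 0] (mod P)" by (simp add: cong_0_iff)
    have "[b + x m ^ d = 0 + x m ^ d] (mod P)" using cong_add[OF \<open>[b = 0] (mod P)\<close> cong_refl] .
    then have "[a = 1 * x m ^ d] (mod P)" using ab cong_trans by simp
    then have "cls a = cls 1" using cls_same[OF unit_1 um] by blast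
    then show ?thesis using cls_one by (intro exI[of _ 1]) simp
  next
    case False
    have "rep m b" unfolding rep_def b_def using x(1) by (intro exI[of _ x]) auto
    then obtain s where s: "1 \<le> s" "s \<le> m" "reach d Mm (s - 1) 0 (cls b)"
      using Suc.IH False by blast
    have "coprime (x m) P" using prime_imp_coprime[OF primeP um] by (simp add: coprime_commute)
    then obtain z where z: "[x m * z = 1] (mod P)"
      using cong_solve_coprime_int by blast
    have uz: "\<not> P dvd z"
    proof
      assume "P dvd z"
      then have "P dvd x m * z" by simp
      then have "P dvd 1" using cong_dvd_iff[OF z] by blast
      then show False using unit_1 by blast
    qed
    define X where "X = b * z ^ d"
    have uX: "\<not> P dvd X" using False uz X_def unit_mult unit_pow by blast
    have "[(x m * z) ^ d = 1 ^ d] (mod P)" using z by (rule cong_pow)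
    then have xz: "[x m ^ d * z ^ d = 1] (mod P)" by (simp add: power_mult_distrib)
    have "[1 + X = x m ^ d * z ^ d + b * z ^ d] (mod P)"
      using cong_add[OF cong_sym[OF xz] cong_refl[of X]] X_def by simp
    also have "x m ^ d * z ^ d + b * z ^ d = (b + x m ^ d) * z ^ d" by (simp add: algebra_simps)
    also have "[(b + x m ^ d) * z ^ d = a * z ^ d] (mod P)"
      using cong_mult[OF cong_sym[OF ab] cong_refl] .
    finally have c1: "[1 + X = a * z ^ d] (mod P)" .
    have u1X: "\<not> P dvd (1 + X)" using unit_cong[OF c1] unit_mult unit_pow Suc.prems(2) uz by blast
    have "cls X = cls b" using cls_same[OF False uz] X_def by simp
    moreover have "cls (1 + X) = cls a" using cls_same[OF Suc.prems(2) uz c1] .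
    ultimately have "Mm (cls b) (cls a) \<noteq> 0" using Mm_iff cls_lt uX u1X by blast
    then have "reach d Mm (Suc (s - 1)) 0 (cls a)" using s(3) cls_lt by auto
    then show ?thesis using s by (intro exI[of _ "s + 1"]) simp
  qed
qed

lemma repB:
  assumes "reach d Mm n 0 c" "\<not> P dvd a" "cls a = c"
  shows "rep (Suc n) a"
  using assms
proof (induction n arbitrary: a c)
  case 0
  then have "cls a = cls 1" using cls_one by simp
  then obtain z where z: "\<not> P dvd z" "[a = 1 * z ^ d] (mod P)"
    using cls_same_ex[OF 0(2) unit_1] by auto
  then show ?case unfolding rep_def by (intro exI[of _ "\<lambda>_. z"]) simp
next
  case (Suc n)
  obtain k where k: "k < d" "reach d Mm n 0 k" "Mm k c \<noteq> 0" using Suc.prems(1) by auto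
  have "c < d" using Suc.prems(3) cls_lt[of a] by simp
  then obtain x where x: "\<not> P dvd x" "\<not> P dvd (1 + x)" "cls x = k" "cls (1 + x) = c"
    using Mm_iff[OF k(1) \<open>c < d\<close>] k(3) by blast
  have "cls a = cls (1 + x)" using Suc.prems(3) x(4) by simp
  then obtain z where z: "\<not> P dvd z" "[a = (1 + x) * z ^ d] (mod P)"
    using cls_same_ex[OF Suc.prems(2) x(2)] by blast
  define b where "b = x * z ^ d"
  have ub: "\<not> P dvd b" using x(1) z(1) b_def unit_mult unit_pow by blast
  have "cls b = cls x" using cls_same[OF x(1) z(1), of b] b_def by simp
  then have "cls b = k" using x(3) by simp
  then have "rep (Suc n) b" using Suc.IH[OF k(2) ub] by blast
  then obtain y where y: "\<forall>i<Suc n. \<not> P dvd y i" "[b = (\<Sum>i<Suc n. y i ^ d)] (mod P)"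
    unfolding rep_def by blast
  define y' where "y' = y(Suc n := z)"
  have s: "(\<Sum>i<Suc (Suc n). y' i ^ d) = (\<Sum>i<Suc n. y i ^ d) + z ^ d"
    unfolding y'_def by simp
  have "[a = b + z ^ d] (mod P)" using z(2) b_def by (simp add: algebra_simps)
  also have "[b + z ^ d = (\<Sum>i<Suc n. y i ^ d) + z ^ d] (mod P)"
    using cong_add[OF y(2) cong_refl] .
  finally have "[a = (\<Sum>i<Suc (Suc n). y' i ^ d)] (mod P)" using s by simp
  moreover have "\<forall>i<Suc (Suc n). \<not> P dvd y' i" using y z(1) unfolding y'_def by (auto simp: less_Suc_eq)
  ultimately show ?case unfolding rep_def by blast
qed

definition dist :: "nat \<Rightarrow> nat" where
  "dist c = (LEAST s. 1 \<le> s \<and> reach d Mm (s - 1) 0 c)"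

lemma s_d_dist:
  assumes "rep k a" "\<not> P dvd a"
  shows "s_d d p a = dist (cls a)"
proof -
  define k0 where "k0 = (LEAST k. rep k a)"
  have rk0: "rep k0 a" unfolding k0_def by (rule LeastI[of "\<lambda>k. rep k a", OF assms(1)])
  obtain s where s: "1 \<le> s" "s \<le> k0" "reach d Mm (s - 1) 0 (cls a)"
    using repA[OF rk0 assms(2)] by blast
  have le1: "dist (cls a) \<le> s" unfolding dist_def
    by (rule Least_le[of "\<lambda>s. 1 \<le> s \<and> reach d Mm (s - 1) 0 (cls a)"]) (use s in blast)
  have D: "1 \<le> dist (cls a) \<and> reach d Mm (dist (cls a) - 1) 0 (cls a)"
    unfolding dist_def
    by (rule LeastI[of "\<lambda>s. 1 \<le> s \<and> reach d Mm (s - 1) 0 (cls a)" s]) (use s in blast)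
  have "rep (Suc (dist (cls a) - 1)) a" using repB[OF conjunct2[OF D] assms(2) refl] .
  moreover have "Suc (dist (cls a) - 1) = dist (cls a)" using D by simp
  ultimately have "rep (dist (cls a)) a" by simp
  then have "k0 \<le> dist (cls a)" unfolding k0_def by (rule Least_le)
  then have "k0 = dist (cls a)" using le1 s(2) by simp
  then show ?thesis unfolding k0_def s_d_rep .
qed


lemma unit_range: "1 \<le> a \<Longrightarrow> a \<le> P - 1 \<Longrightarrow> \<not> P dvd a"
  using zdvd_not_zless by auto

lemma rep_ones: "1 \<le> a \<Longrightarrow> rep (nat a) a"
  unfolding rep_def by (intro exI[of _ "\<lambda>_. 1"]) (use pr not_prime_1 in auto)

lemma reach_shift:
  assumes "\<alpha> < d"
  shows "reach d Mm n ((\<alpha> + th) mod d) th \<longleftrightarrow> reach d Mm n 0 \<alpha>"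
proof
  assume "reach d Mm n 0 \<alpha>"
  from reach_rev[OF _ assms dpos Mm_sym this] have "reach d Mm n ((\<alpha> + th) mod d) ((0 + th) mod d)"
    using dpos by blast
  then show "reach d Mm n ((\<alpha> + th) mod d) th" using th_lt by simp
next
  assume r: "reach d Mm n ((\<alpha> + th) mod d) th"
  have "(\<alpha> + th) mod d < d" using dpos by simp
  from reach_rev[OF this th_lt dpos Mm_sym r]
  have "reach d Mm n ((th + th) mod d) (((\<alpha> + th) mod d + th) mod d)" .
  moreover have "((\<alpha> + th) mod d + th) mod d = \<alpha>"
  proof -
    have "((\<alpha> + th) mod d + th) mod d = (\<alpha> + (th + th)) mod d" by (simp add: mod_add_left_eq add.assoc)
    also have "\<dots> = (\<alpha> + (th + th) mod d) mod d" by (simp add: mod_add_right_eq)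
    also have "\<dots> = \<alpha>" using th2 assms by simp
    finally show ?thesis .
  qed
  ultimately show "reach d Mm n 0 \<alpha>" using th2 by simp
qed

lemma main:
  "g_d d p = Max ((\<lambda>\<alpha>. LEAST s. 1 \<le> s \<and> mpow d Mm (s - 1) ((\<alpha> + th) mod d) th \<noteq> 0) ` {..<d})"
proof -
  have img: "(\<lambda>\<alpha>. LEAST s. 1 \<le> s \<and> mpow d Mm (s - 1) ((\<alpha> + th) mod d) th \<noteq> 0) ` {..<d} = dist ` {..<d}"
  proof (rule image_cong[OF refl])
    fix \<alpha> assume "\<alpha> \<in> {..<d}"
    then have "\<alpha> < d" by simp
    then show "(LEAST s. 1 \<le> s \<and> mpow d Mm (s - 1) ((\<alpha> + th) mod d) th \<noteq> 0) = dist \<alpha>"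
      unfolding dist_def mpow_reach using reach_shift by simp
  qed
  have "s_d d p ` {1..P - 1} = dist ` {..<d}"
  proof
    show "s_d d p ` {1..P - 1} \<subseteq> dist ` {..<d}"
    proof
      fix y assume "y \<in> s_d d p ` {1..P - 1}"
      then obtain a where a: "1 \<le> a" "a \<le> P - 1" "y = s_d d p a" by auto
      have "y = dist (cls a)" using s_d_dist[OF rep_ones[OF a(1)] unit_range[OF a(1,2)]] a(3) by simp
      then show "y \<in> dist ` {..<d}" using cls_lt by blast
    qed
  next
    show "dist ` {..<d} \<subseteq> s_d d p ` {1..P - 1}"
    proof
      fix y assume "y \<in> dist ` {..<d}"
      then obtain \<alpha> where al: "\<alpha> < d" "y = dist \<alpha>" by auto
      define a where "a = int w ^ \<alpha> mod P"
      have P0: "P > 0" using pr prime_gt_0_nat by simp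
      have c: "[int w ^ \<alpha> = a] (mod P)" unfolding a_def by (simp add: cong_def)
      have ua: "\<not> P dvd a" using unit_cong[OF cong_sym[OF c] unit_w] .
      have "a \<ge> 0" "a < P" using P0 unfolding a_def by auto
      moreover have "a \<noteq> 0" using ua by auto
      ultimately have a1: "1 \<le> a" "a \<le> P - 1" by auto
      have "cls a = \<alpha>" using cls_eq[OF ua c] al(1) by simp
      then have "s_d d p a = y" using s_d_dist[OF rep_ones[OF a1(1)] ua] al(2) by simp
      then show "y \<in> s_d d p ` {1..P - 1}" using a1 by force
    qed
  qed
  then show ?thesis unfolding g_d_def img by simp
qed

end

theorem theorem2:
  fixes p d f w :: nat
  assumes "prime p" and "p > 2" and "d \<ge> 2" and "p - 1 = d * f"
    and "residue_primroot p w"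
  defines "\<theta> \<equiv> (if even f then 0 else d div 2)"
  defines "M \<equiv> (\<lambda>i j. if cyc p d f w i j = 0 then 0 else 1)"
  shows "g_d d p = Max ((\<lambda>\<alpha>. LEAST s. 1 \<le> s \<and> mpow d M (s - 1) ((\<alpha> + \<theta>) mod d) \<theta> \<noteq> 0) ` {..<d})"
proof -
  interpret cycset p d f w using assms(1-5) by unfold_locales
  have "\<theta> = th" unfolding \<theta>_def th_def ..
  moreover have "M = Mm" unfolding M_def Mm_def ..
  ultimately show ?thesis using main by simp
qed

end
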